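(* Let $q>1$, let $\delta_0,\dots,\delta_{m-1}$ be positive numbers, and set $V_i=\sum_{j=i}^{m-1}\delta_j$ for $0\le i\le m-1$. Then $$\sum_{i=0}^{m-1}\frac{V_i^q}{\delta_i}\ge\frac{q-1}4\sum_{j=1}^{m-1}jV_j^{q-1}.$$ *)

theory Defs
  imports Complex_Main
begin

end

theory Submission
  imports Defs
begin

lemma key0:
  fixes a b p :: real
  assumes "0<b" "b\<le>a" "p>0"
  shows "p * b powr p * (a-b) \<le> a * (a powr p - b powr p)"
proof -
  have a: "a > 0" using assms by linarith
  have "ln (b/a) \<le> b/a - 1" using assms a by (intro ln_le_minus_one) simp
  hence l: "ln a - ln b \<ge> (a-b)/a" using assms a by (simp add: ln_div diff_divide_distrib)
  have e: "a powr p = b powr p * exp (p*(ln a - ln b))"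
    using assms a by (simp add: powr_def exp_add[symmetric] algebra_simps)
  have "exp (p*(ln a - ln b)) \<ge> 1 + p*((a-b)/a)"
    using exp_ge_add_one_self[of "p*(ln a - ln b)"] l assms
    by (smt (verit) mult_left_mono)
  hence "a powr p \<ge> b powr p * (1 + p*((a-b)/a))"
    unfolding e by (intro mult_left_mono) auto
  hence "a * a powr p \<ge> a * (b powr p * (1 + p*((a-b)/a)))"
    using a by (intro mult_left_mono) auto
  also have "a * (b powr p * (1 + p*((a-b)/a))) = a * b powr p + p * b powr p * (a-b)"
    using a by (simp add: field_simps)
  finally show ?thesis by (simp add: algebra_simps)
qed

lemma keyA:
  fixes a b q :: real
  assumes "0\<le>b" "b<a" "q>1"
  shows "(q-1) * (a-b) * b powr (2*(q-1)) \<le> a powr q * (a powr (q-1) - b powr (q-1))"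
proof (cases "b = 0")
  case True
  then show ?thesis using assms by simp
next
  case False
  hence b: "b > 0" using assms by simp
  let ?p = "q-1"
  have k: "?p * b powr ?p * (a-b) \<le> a * (a powr ?p - b powr ?p)"
    using key0[of b a ?p] b assms by simp
  have ab: "b powr ?p \<le> a powr ?p" using b assms by (intro powr_mono2) auto
  have "(q-1) * (a-b) * b powr (2*(q-1)) = b powr ?p * (?p * b powr ?p * (a-b))"
    by (simp add: powr_add[symmetric] algebra_simps)
  also have "\<dots> \<le> a powr ?p * (?p * b powr ?p * (a-b))"
    using ab assms b by (intro mult_right_mono) auto
  also have "\<dots> \<le> a powr ?p * (a * (a powr ?p - b powr ?p))"
    using k by (intro mult_left_mono) auto
  also have "\<dots> = (a powr ?p * a) * (a powr (q-1) - b powr (q-1))"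
    by (simp add: algebra_simps)
  also have "a powr ?p * a = a powr q"
    using assms b by (subst mult.commute, simp add: powr_mult_base)
  finally show ?thesis by simp
qed

lemma keyB:
  fixes b d q :: real
  assumes "0\<le>b" "d>0" "q>1"
  shows "q * b powr (q-1) \<le> (b+d) powr q / d"
proof (cases "b = 0")
  case True
  then show ?thesis using assms by simp
next
  case False
  hence b: "b > 0" using assms by simp
  let ?a = "b+d"
  have k: "(q-1) * b powr (q-1) * d \<le> ?a * (?a powr (q-1) - b powr (q-1))"
    using key0[of b ?a "q-1"] b assms by simp
  have "q * b powr (q-1) * d \<le> (q-1) * b powr (q-1) * d + b powr (q-1) * ?a"
    using b assms by (simp add: algebra_simps)
  also have "\<dots> \<le> ?a * ?a powr (q-1)" using k by (simp add: algebra_simps)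
  also have "\<dots> = ?a powr q" using b assms by (simp add: powr_add[symmetric] powr_mult_base)
  finally show ?thesis using assms by (simp add: field_simps)
qed

lemma amgm:
  fixes x d Z :: real
  assumes "x>0" "d>0"
  shows "2*Z - Z^2 * d / x \<le> x / d"
proof -
  have "x/d - (2*Z - Z^2*d/x) = (x - Z*d)^2/(x*d)"
    using assms by (simp add: field_simps power2_eq_square)
  moreover have "(x - Z*d)^2/(x*d) \<ge> 0" using assms by simp
  ultimately show ?thesis by linarith
qed

lemma sumlem:
  fixes f :: "nat \<Rightarrow> real" and q :: real
  assumes f: "\<And>j. f j \<ge> 0" and q: "q>1"
  shows "q * f 1 + (\<Sum>i=1..n. (q-1)/2*real (i+1)*f(i+1) - (q-1)/16*(real i+1)^2*(f i - f(i+1)))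
    \<ge> (q-1)/4 * (\<Sum>j=1..n+1. real j * f j) + (q-1)/16*(real n+2)^2 * f(n+1)"
proof (induction n)
  case 0
  have "(q-1)/2 * f 1 \<le> q * f 1" using f[of 1] q by (intro mult_right_mono) auto
  moreover have "(q-1)/4 * (\<Sum>j=1..0+1. real j * f j) + (q-1)/16*(real 0+2)^2 * f(0+1) = (q-1)/2 * f 1"
    by (simp add: field_simps power2_eq_square)
  moreover have "q * f 1 + (\<Sum>i=1..0. (q-1)/2*real (i+1)*f(i+1) - (q-1)/16*(real i+1)^2*(f i - f(i+1))) = q * f 1"
    by simp
  ultimately show ?case by linarith
next
  case (Suc n)
  have h: "(q-1)/16*((real n+3)^2 - (real n+2)^2) * f (n+2) \<le> (q-1)/4 * (real n+2) * f (n+2)"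
  proof -
    have "(q-1)*(2*real n+5) \<le> (q-1)*(4*real n+8)" using q by (intro mult_left_mono) auto
    moreover have "(q-1)/16*((real n+3)^2 - (real n+2)^2) = (q-1)*(2*real n+5)/16"
      by (simp add: power2_eq_square field_simps)
    moreover have "(q-1)/4*(real n+2) = (q-1)*(4*real n+8)/16"
      by (simp add: field_simps)
    ultimately have "(q-1)/16*((real n+3)^2 - (real n+2)^2) \<le> (q-1)/4 * (real n+2)"
      by linarith
    thus ?thesis using f[of "n+2"] by (intro mult_right_mono) auto
  qed
  define g where "g i = (q-1)/2*real (i+1)*f(i+1) - (q-1)/16*(real i+1)^2*(f i - f(i+1))" for i
  define c where "c = (q-1)/16"
  define X where "X = f (n+1)"
  define Y where "Y = f (n+2)"
  define S where "S = (\<Sum>j=1..n+1. real j * f j)"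
  have IH: "q * f 1 + (\<Sum>i=1..n. g i) \<ge> (q-1)/4 * S + c*(real n+2)^2 * X"
    using Suc unfolding g_def c_def X_def S_def by simp
  have s1: "(\<Sum>i=1..Suc n. g i) = (\<Sum>i=1..n. g i) + g (Suc n)" by simp
  have s2: "(\<Sum>j=1..Suc n+1. real j * f j) = S + (real n+2) * Y"
    unfolding S_def Y_def by (simp add: add.commute)
  have gS: "g (Suc n) = (q-1)/2*(real n+2)*Y - c*(real n+2)^2*X + c*(real n+2)^2*Y"
    unfolding g_def c_def X_def Y_def by (simp add: field_simps)
  have h': "c*((real n+3)^2 - (real n+2)^2) * Y \<le> (q-1)/4 * (real n+2) * Y"
    using h unfolding c_def Y_def by simp
  have e1: "c*(real (Suc n)+2)^2 * f (Suc n+1) = c*(real n+2)^2*Y + c*((real n+3)^2 - (real n+2)^2) * Y"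
    unfolding Y_def by (simp add: algebra_simps)
  have e2: "(q-1)/4 * (S + (real n+2) * Y) = (q-1)/4 * S + (q-1)/4 * ((real n+2) * Y)"
    by (rule distrib_left)
  have e2': "(q-1)/4 * ((real n+2) * Y) = (q-1)/4 * (real n+2) * Y"
    by (rule mult.assoc[symmetric])
  have hh: "(q-1)/2 = (q-1)/4 + (q-1)/4" by simp
  have e3: "(q-1)/2*(real n+2)*Y = (q-1)/4 * (real n+2) * Y + (q-1)/4 * (real n+2) * Y"
    by (subst hh, simp only: distrib_right)
  have "q * f 1 + (\<Sum>i=1..Suc n. g i) \<ge> (q-1)/4 * (\<Sum>j=1..Suc n+1. real j * f j) + c*(real (Suc n)+2)^2 * f(Suc n+1)"
    unfolding s1 s2 e1 e2 using IH gS h' e3 e2' by linarith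
  then show ?case unfolding g_def c_def by simp
qed

theorem lemma6p6:
  fixes q :: real and m :: nat and \<delta> V :: "nat \<Rightarrow> real"
  assumes "q > 1"
    and "\<And>i. i < m \<Longrightarrow> \<delta> i > 0"
    and "\<And>i. i < m \<Longrightarrow> V i = (\<Sum>j=i..m-1. \<delta> j)"
  shows "(\<Sum>i<m. V i powr q / \<delta> i) \<ge> (q - 1) / 4 * (\<Sum>j=1..m-1. real j * V j powr (q - 1))"
proof (cases "m \<ge> 2")
  case False
  hence "m = 0 \<or> m = 1" by auto
  then show ?thesis using assms(2)
    by (auto intro!: divide_nonneg_pos)
next
  case True
  note q = assms(1) and dpos = assms(2) and Vdef = assms(3)
  define W where "W i = (if i < m then V i else 0)" for i
  define f where "f i = W i powr (q-1)" for i
  have Wrec: "W i = \<delta> i + W (Suc i)" if "i < m" for i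
  proof (cases "Suc i < m")
    case True
    have "{i..m-1} = insert i {Suc i..m-1}" using True by auto
    then show ?thesis using True that Vdef unfolding W_def by simp
  next
    case False
    hence "m - 1 = i" using that by simp
    then show ?thesis using False that Vdef unfolding W_def by simp
  qed
  have Wnn: "W i \<ge> 0" for i
  proof (induction "m - i" arbitrary: i)
    case 0
    then show ?case unfolding W_def by simp
  next
    case (Suc k)
    hence "i < m" by simp
    then show ?case using Suc.hyps(1)[of "Suc i"] Suc.hyps(2) Wrec[of i] dpos[of i] by simp
  qed
  have fnn: "f j \<ge> 0" for j unfolding f_def by simp
  have t0: "q * f 1 \<le> V 0 powr q / \<delta> 0"
  proof -
    have "q * W 1 powr (q-1) \<le> (W 1 + \<delta> 0) powr q / \<delta> 0"
      using keyB[of "W 1" "\<delta> 0" q] Wnn dpos True q by simp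
    moreover have "W 1 + \<delta> 0 = V 0" using Wrec[of 0] True unfolding W_def by simp
    ultimately show ?thesis unfolding f_def by simp
  qed
  have ti: "(q-1)/2*real (i+1)*f(i+1) - (q-1)/16*(real i+1)^2*(f i - f(i+1)) \<le> V i powr q / \<delta> i"
    if "i < m" for i
  proof -
    let ?a = "W i" and ?b = "W (Suc i)" and ?d = "\<delta> i"
    have d: "?d > 0" using dpos that by simp
    have ab: "?a = ?b + ?d" using Wrec that by simp
    have b: "?b \<ge> 0" using Wnn by simp
    have a: "?a > 0" using ab b d by simp
    define Z where "Z = (q-1)/4*real (i+1)*f(i+1)"
    have am: "2*Z - Z^2 * ?d / ?a powr q \<le> ?a powr q / ?d"
      using amgm[of "?a powr q" ?d Z] a d by simp
    have kA: "(q-1) * ?d * ?b powr (2*(q-1)) \<le> ?a powr q * (?a powr (q-1) - ?b powr (q-1))"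
      using keyA[of ?b ?a q] ab b d q by simp
    have fsq: "f (i+1) ^ 2 = ?b powr (2*(q-1))"
      unfolding f_def by (simp add: power2_eq_square powr_add[symmetric])
    have "Z^2 * ?d / ?a powr q = ((q-1)/4*real (i+1))^2 * (?d * ?b powr (2*(q-1)) / ?a powr q)"
      unfolding Z_def fsq[symmetric] by (simp add: power2_eq_square)
    also have "?d * ?b powr (2*(q-1)) / ?a powr q \<le> (?a powr (q-1) - ?b powr (q-1)) / (q-1)"
      using kA a q by (simp add: field_simps)
    hence "((q-1)/4*real (i+1))^2 * (?d * ?b powr (2*(q-1)) / ?a powr q)
        \<le> ((q-1)/4*real (i+1))^2 * ((?a powr (q-1) - ?b powr (q-1)) / (q-1))"
      by (intro mult_left_mono) auto
    also have "((q-1)/4*real (i+1))^2 * ((?a powr (q-1) - ?b powr (q-1)) / (q-1))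
        = (q-1)/16*(real i+1)^2*(f i - f(i+1))"
      unfolding f_def using q by (simp add: power2_eq_square field_simps)
    finally have pen: "Z^2 * ?d / ?a powr q \<le> (q-1)/16*(real i+1)^2*(f i - f(i+1))" .
    have "?a powr q / ?d = V i powr q / \<delta> i" unfolding W_def using that by simp
    moreover have "2*Z = (q-1)/2*real (i+1)*f(i+1)" unfolding Z_def by simp
    ultimately show ?thesis using am pen by linarith
  qed
  have split: "{..<m} = insert 0 {1..m-1}" using True by auto
  have "(\<Sum>i<m. V i powr q / \<delta> i) = V 0 powr q / \<delta> 0 + (\<Sum>i=1..m-1. V i powr q / \<delta> i)"
    unfolding split by simp
  also have "\<dots> \<ge> q * f 1 + (\<Sum>i=1..m-1. (q-1)/2*real (i+1)*f(i+1) - (q-1)/16*(real i+1)^2*(f i - f(i+1)))"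
    using t0 ti True by (intro add_mono sum_mono) auto
  also (xtrans) have "q * f 1 + (\<Sum>i=1..m-1. (q-1)/2*real (i+1)*f(i+1) - (q-1)/16*(real i+1)^2*(f i - f(i+1)))
     \<ge> (q-1)/4 * (\<Sum>j=1..m-1+1. real j * f j) + (q-1)/16*(real (m-1)+2)^2 * f(m-1+1)"
    by (rule sumlem[OF fnn q])
  also (xtrans) have "(q-1)/4 * (\<Sum>j=1..m-1+1. real j * f j) + (q-1)/16*(real (m-1)+2)^2 * f(m-1+1)
      = (q-1)/4 * (\<Sum>j=1..m-1. real j * f j)"
  proof -
    have "f m = 0" "f (m-1+1) = 0" using True by (simp_all add: f_def W_def)
    moreover have "m-1+1 = Suc (m-1)" using True by simp
    ultimately show ?thesis by (simp only: sum.cl_ivl_Suc) simp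
  qed
  also have "(\<Sum>j=1..m-1. real j * f j) = (\<Sum>j=1..m-1. real j * V j powr (q - 1))"
    using True by (intro sum.cong) (auto simp: f_def W_def)
  finally show ?thesis .
qed

end
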